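(* Let $m>n>0$ be relatively prime integers with $(m,n)\neq(2,1)$, and $(r,s)\in\mathbb{Z}^2$. Then $(r,s)=\beta(m,n)$ if and only if $(-s,\,r+2s)=\beta(2m-n,\,m)$.
   Context: For relatively prime integers $a>b>0$, $\beta(a,b)$ denotes the Bézout coefficients given by the Euclidean algorithm: with $a=q_1b+r_1$, $b=q_2r_1+r_2$, $\dots$, $r_{k-2}=q_kr_{k-1}+r_k$, $r_{k-1}=1$, $r_k=0$ ($r_{-1}=a$, $r_0=b$), write $\begin{pmatrix}a\\ b\end{pmatrix}=M\begin{pmatrix}1\\0\end{pmatrix}$ with $M=\prod_{i=1}^k\begin{pmatrix}q_i&1\\1&0\end{pmatrix}$; then $\beta(a,b)$ is the first row of $M^{-1}$, and $\beta(a,b)=(r,s)$ satisfies $ra+sb=1$. *)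

theory Defs
  imports Main
begin

fun euclid_quots :: "nat \<Rightarrow> nat \<Rightarrow> nat list" where
  "euclid_quots a b = (if b = 0 then [] else (a div b) # euclid_quots b (a mod b))"

text \<open>2x2 integer matrices as tuples (a11, a12, a21, a22).\<close>
type_synonym mat2 = "int \<times> int \<times> int \<times> int"

definition mat2_mult :: "mat2 \<Rightarrow> mat2 \<Rightarrow> mat2" where
  "mat2_mult A B = (case A of (a, b, c, d) \<Rightarrow> case B of (e, f, g, h) \<Rightarrow>
     (a*e + b*g, a*f + b*h, c*e + d*g, c*f + d*h))"

definition mat2_id :: mat2 where "mat2_id = (1, 0, 0, 1)"

definition mat2_det :: "mat2 \<Rightarrow> int" where
  "mat2_det A = (case A of (a, b, c, d) \<Rightarrow> a*d - b*c)"

text \<open>Inverse of a unimodular integer matrix (det = +-1): adjugate divided by det.\<close>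
definition mat2_inv :: "mat2 \<Rightarrow> mat2" where
  "mat2_inv A = (case A of (a, b, c, d) \<Rightarrow>
     (d div mat2_det A, (-b) div mat2_det A, (-c) div mat2_det A, a div mat2_det A))"

definition euclid_matrix :: "nat \<Rightarrow> nat \<Rightarrow> mat2" where
  "euclid_matrix a b = foldr (\<lambda>q M. mat2_mult (int q, 1, 1, 0) M) (euclid_quots a b) mat2_id"

definition beta :: "int \<Rightarrow> int \<Rightarrow> int \<times> int" where
  "beta a b = (case mat2_inv (euclid_matrix (nat a) (nat b)) of (x, y, _, _) \<Rightarrow> (x, y))"

end

theory Submission
  imports Defs
begin

lemma em_step:
  assumes "b \<noteq> 0"
  shows "euclid_matrix a b = mat2_mult (int (a div b), 1, 1, 0) (euclid_matrix b (a mod b))"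
proof -
  have "euclid_quots a b = (a div b) # euclid_quots b (a mod b)"
    using assms by (subst euclid_quots.simps) simp
  then show ?thesis unfolding euclid_matrix_def by simp
qed

lemma em_zero: "euclid_matrix a 0 = mat2_id"
proof -
  have "euclid_quots a 0 = []" by (subst euclid_quots.simps) simp
  then show ?thesis unfolding euclid_matrix_def by simp
qed

lemma em_inv:
  "0 < b \<longrightarrow> b < a \<longrightarrow> coprime a b \<longrightarrow>
   (\<exists>x y. euclid_matrix a b = (int a, x, int b, y) \<and>
      (int a * y - int b * x = 1 \<or> int a * y - int b * x = -1) \<and>
      1 \<le> x \<and> 0 \<le> y \<and> 2 * y \<le> int b \<and> 2 * x \<le> int a)"
proof (induction a b rule: euclid_quots.induct)
  case (1 a b)
  show ?case
  proof (intro impI)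
    assume b0: "0 < b" and ba: "b < a" and cop: "coprime a b"
    define q where "q = a div b"
    define c where "c = a mod b"
    have aeq: "a = q * b + c" unfolding q_def c_def by simp
    have cb: "c < b" unfolding c_def using b0 by simp
    have step: "euclid_matrix a b = mat2_mult (int q, 1, 1, 0) (euclid_matrix b c)"
      unfolding q_def c_def using em_step b0 by simp
    have q1: "q \<ge> 1" unfolding q_def using ba b0 by (metis div_greater_zero_iff less_imp_le_nat less_one not_less)
    show "\<exists>x y. euclid_matrix a b = (int a, x, int b, y) \<and>
      (int a * y - int b * x = 1 \<or> int a * y - int b * x = -1) \<and>
      1 \<le> x \<and> 0 \<le> y \<and> 2 * y \<le> int b \<and> 2 * x \<le> int a"
    proof (cases "c = 0")
      case True
      have "b dvd a" using True c_def by auto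
      then have "b = 1" using cop by (meson coprime_common_divisor_nat dvd_refl)
      then have "a = q" using aeq True by simp
      show ?thesis
        by (rule exI[of _ 1], rule exI[of _ 0])
          (use step True \<open>b = 1\<close> \<open>a = q\<close> ba in \<open>simp add: em_zero mat2_mult_def mat2_id_def\<close>)
    next
      case False
      have copbc: "coprime b c" using cop unfolding c_def
        by (metis coprime_commute coprime_mod_left_iff b0 less_not_refl2 gr_implies_not0)
      from "1.IH"[OF _] b0 False cb copbc obtain x' y' where
        E: "euclid_matrix b c = (int b, x', int c, y')"
        and d: "int b * y' - int c * x' = 1 \<or> int b * y' - int c * x' = -1"
        and bd: "1 \<le> x'" "0 \<le> y'" "2 * y' \<le> int c" "2 * x' \<le> int b"
        unfolding c_def by auto
      have M: "euclid_matrix a b = (int a, int q * x' + y', int b, x')"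
        using step E aeq by (simp add: mat2_mult_def)
      have ai: "int a = int q * int b + int c" using aeq by simp
      have "int a * x' - int b * (int q * x' + y') = - (int b * y' - int c * x')"
        unfolding ai by (simp add: algebra_simps)
      then have D: "int a * x' - int b * (int q * x' + y') = 1 \<or>
                    int a * x' - int b * (int q * x' + y') = -1" using d by auto
      have "int q * x' \<ge> x'" using q1 bd(1) by (simp add: mult_le_cancel_right1)
      moreover have "2 * (int q * x') \<le> int q * int b"
        using bd(4) q1 by (metis mult.left_commute mult_left_mono of_nat_0_le_iff)
      ultimately have g: "euclid_matrix a b = (int a, int q * x' + y', int b, x') \<and>
        (int a * x' - int b * (int q * x' + y') = 1 \<or> int a * x' - int b * (int q * x' + y') = -1) \<and>
        1 \<le> int q * x' + y' \<and> 0 \<le> x' \<and> 2 * x' \<le> int b \<and> 2 * (int q * x' + y') \<le> int a"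
        proof (intro conjI)
        show "euclid_matrix a b = (int a, int q * x' + y', int b, x')" by (rule M)
        show "int a * x' - int b * (int q * x' + y') = 1 \<or> int a * x' - int b * (int q * x' + y') = -1" by (rule D)
      next
        show "2 * (int q * x' + y') \<le> int a" using ai bd \<open>2 * (int q * x') \<le> int q * int b\<close>
          by (simp add: distrib_left)
      qed (insert bd ai, linarith)+
      then show ?thesis by blast
    qed
  qed
qed

lemma beta_char:
  fixes m n :: int
  assumes "m > n" and "n > 0" and "coprime m n" and "(m, n) \<noteq> (2, 1)"
  shows "fst (beta m n) * m + snd (beta m n) * n = 1 \<and> 2 * \<bar>snd (beta m n)\<bar> < m"
proof -
  define a where "a = nat m"
  define b where "b = nat n"
  have ma: "m = int a" and nb: "n = int b" using assms unfolding a_def b_def by auto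
  have cop: "coprime a b" using assms(3) unfolding ma nb by simp
  have "0 < b" "b < a" using assms unfolding ma nb by auto
  with em_inv cop obtain x y where
    E: "euclid_matrix a b = (int a, x, int b, y)"
    and d: "int a * y - int b * x = 1 \<or> int a * y - int b * x = -1"
    and bd: "1 \<le> x" "0 \<le> y" "2 * y \<le> int b" "2 * x \<le> int a" by blast
  have B: "beta m n = (y div (int a * y - x * int b), (-x) div (int a * y - x * int b))"
    unfolding beta_def mat2_inv_def mat2_det_def using E a_def b_def by simp
  have strict: "2 * x < int a"
  proof (rule ccontr)
    assume "\<not> 2 * x < int a"
    then have ax: "int a = 2 * x" using bd by simp
    have "x * (2 * y - int b) = int a * y - int b * x" unfolding ax by (simp add: algebra_simps)
    then have "x dvd 1" using d by (metis dvd_minus_iff dvd_triv_left)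
    then have "x = 1" using bd by (simp add: zdvd_imp_le)
    then have "m = 2" using ax ma by simp
    then have "n = 1" using assms by simp
    then show False using \<open>m = 2\<close> assms(4) by simp
  qed
  from d show ?thesis
  proof
    assume d1: "int a * y - int b * x = 1"
    then have "int a * y - x * int b = 1" by (simp add: mult.commute)
    then have "beta m n = (y, -x)" using B by simp
    then show ?thesis using d1 strict bd ma nb by (simp add: mult.commute)
  next
    assume d1: "int a * y - int b * x = -1"
    then have "int a * y - x * int b = -1" by (simp add: mult.commute)
    then have "beta m n = (-y, x)" using B by simp
    then show ?thesis using d1 strict bd ma nb by (simp add: algebra_simps)
  qed
qed

lemma uniq:
  fixes m n r s r' s' :: int
  assumes "m > 0" "coprime m n" "r * m + s * n = 1" "r' * m + s' * n = 1"
    "2 * \<bar>s\<bar> < m" "2 * \<bar>s'\<bar> < m"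
  shows "r = r' \<and> s = s'"
proof -
  have "(s' - s) * n = (r - r') * m" using assms(3,4) by (simp add: algebra_simps)
  then have "m dvd (s' - s) * n" by simp
  then have dv: "m dvd (s' - s)" using assms(2) by (simp add: coprime_dvd_mult_left_iff)
  have "s' - s = 0"
  proof (rule ccontr)
    assume "s' - s \<noteq> 0"
    then have "\<bar>m\<bar> \<le> \<bar>s' - s\<bar>" using dv dvd_imp_le_int by blast
    then show False using assms(1,5,6) by linarith
  qed
  then have "s = s'" by simp
  then have "r * m + s' * n = r' * m + s' * n" using assms(3,4) by simp
  then have "r = r'" using assms(1) by simp
  then show ?thesis using \<open>s = s'\<close> by simp
qed

lemma char_iff:
  fixes m n r s :: int
  assumes "m > n" and "n > 0" and "coprime m n" and "(m, n) \<noteq> (2, 1)"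
  shows "(r, s) = beta m n \<longleftrightarrow> r * m + s * n = 1 \<and> 2 * \<bar>s\<bar> < m"
proof -
  have c: "fst (beta m n) * m + snd (beta m n) * n = 1 \<and> 2 * \<bar>snd (beta m n)\<bar> < m"
    using beta_char[OF assms] .
  show ?thesis
  proof
    assume "(r, s) = beta m n"
    then show "r * m + s * n = 1 \<and> 2 * \<bar>s\<bar> < m" using c by (metis fst_conv snd_conv)
  next
    assume h: "r * m + s * n = 1 \<and> 2 * \<bar>s\<bar> < m"
    have "r = fst (beta m n) \<and> s = snd (beta m n)"
      using uniq[of m n r s "fst (beta m n)" "snd (beta m n)"] h c assms by auto
    then show "(r, s) = beta m n" by simp
  qed
qed

lemma bound_equiv:
  fixes m n r s :: int
  assumes "m > n" and "n > 0" and "(m, n) \<noteq> (2, 1)" and e: "r * m + s * n = 1"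
  shows "2 * \<bar>s\<bar> < m \<longleftrightarrow> 2 * \<bar>r + 2 * s\<bar> < 2 * m - n"
proof -
  define k where "k = 2 * m - n"
  define t where "t = r + 2 * s"
  have k3: "k \<ge> 3" using assms unfolding k_def by simp
  have m0: "m > 0" using assms by simp
  have et: "m * t = 1 + s * k" unfolding t_def k_def using e by (simp add: algebra_simps)
  have a2: "m * (2 * \<bar>t\<bar>) = \<bar>2 + 2 * s * k\<bar>"
  proof -
    have "m * (2 * \<bar>t\<bar>) = \<bar>2 * (m * t)\<bar>" using m0 by (simp add: abs_mult)
    also have "\<dots> = \<bar>2 + 2 * s * k\<bar>" unfolding et by (simp add: algebra_simps)
    finally show ?thesis .
  qed
  have ask: "\<bar>2 * s * k\<bar> = 2 * \<bar>s\<bar> * k" using k3 by (simp add: abs_mult)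
  show ?thesis unfolding k_def[symmetric] t_def[symmetric]
  proof
    assume "2 * \<bar>s\<bar> < m"
    then have "2 * \<bar>s\<bar> \<le> m - 1" by simp
    then have "2 * \<bar>s\<bar> * k \<le> (m - 1) * k" using k3 by (simp add: mult_right_mono)
    moreover have "\<bar>2 + 2 * s * k\<bar> \<le> 2 + \<bar>2 * s * k\<bar>" by linarith
    ultimately have "m * (2 * \<bar>t\<bar>) < m * k" using a2 ask k3 by (simp add: algebra_simps)
    then show "2 * \<bar>t\<bar> < k" using m0 by simp
  next
    assume h: "2 * \<bar>t\<bar> < k"
    show "2 * \<bar>s\<bar> < m"
    proof (rule ccontr)
      assume "\<not> 2 * \<bar>s\<bar> < m"
      then consider "2 * \<bar>s\<bar> = m" | "2 * \<bar>s\<bar> \<ge> m + 1" by linarith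
      then show False
      proof cases
        case 1
        have "2 * r * m + (2 * s) * n = 2" using e by (simp add: algebra_simps)
        moreover have "2 * s = m \<or> 2 * s = - m" using 1 by linarith
        ultimately have "m * (2 * r + n) = 2 \<or> m * (2 * r - n) = 2" by (auto simp: algebra_simps)
        then have "m dvd 2" by (metis dvd_triv_left)
        then have "m \<le> 2" by (simp add: zdvd_imp_le)
        then have "m = 2" "n = 1" using assms by auto
        then show False using assms(3) by simp
      next
        case 2
        then have "(m + 1) * k \<le> 2 * \<bar>s\<bar> * k" using k3 by (simp add: mult_right_mono)
        moreover have "\<bar>2 * s * k\<bar> - 2 \<le> \<bar>2 + 2 * s * k\<bar>" by linarith
        ultimately have "m * k \<le> m * (2 * \<bar>t\<bar>)" using a2 ask k3 by (simp add: algebra_simps)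
        then have "k \<le> 2 * \<bar>t\<bar>" using m0 by simp
        then show False using h by simp
      qed
    qed
  qed
qed

theorem lemma2p7:
  fixes m n r s :: int
  assumes "m > n" and "n > 0" and "coprime m n" and "(m, n) \<noteq> (2, 1)"
  shows "(r, s) = beta m n \<longleftrightarrow> (- s, r + 2 * s) = beta (2 * m - n) m"
proof -
  have c2: "coprime (2 * m - n) m"
  proof (rule coprimeI)
    fix c assume h1: "c dvd 2 * m - n" and h2: "c dvd m"
    then have "c dvd 2 * m" by simp
    then have "c dvd 2 * m - (2 * m - n)" using h1 by (rule dvd_diff)
    then have "c dvd n" by simp
    then show "is_unit c" using assms(3) h2 coprime_common_divisor by blast
  qed
  have A: "(r, s) = beta m n \<longleftrightarrow> r * m + s * n = 1 \<and> 2 * \<bar>s\<bar> < m"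
    using char_iff[OF assms] .
  have B: "(- s, r + 2 * s) = beta (2 * m - n) m \<longleftrightarrow>
      (- s) * (2 * m - n) + (r + 2 * s) * m = 1 \<and> 2 * \<bar>r + 2 * s\<bar> < 2 * m - n"
    by (rule char_iff) (use assms c2 in auto)
  have eq: "(- s) * (2 * m - n) + (r + 2 * s) * m = r * m + s * n" by (simp add: algebra_simps)
  show ?thesis unfolding A B eq using bound_equiv[OF assms(1,2,4)] by blast
qed

end
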